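(* For every graph $G$ and every positive integer $t$, $\partial\Gamma(G)\ge t$ if and only if $G$ contains an induced subgraph which is a minimal pG-$t$-atom.
   Context: A proper $k$-coloring of $G$ is a surjective map $c:V(G)\to\{1,\ldots,k\}$ with $c(u)\ne c(v)$ for every edge $uv$. A vertex of color $i$ is a Grundy vertex if it has, for every $j<i$, a neighbor of color $j$. A partial Grundy $k$-coloring is a proper $k$-coloring in which every color class contains at least one Grundy vertex; $\partial\Gamma(G)$ is the largest $k$ such that $G$ has a partial Grundy $k$-coloring. A pG-$t$-atom is a graph $A$ whose vertex set can be partitioned into $t$ sets $D_1,\ldots,D_t$, where each $D_i$ contains a special vertex $c_i$, such that: each $D_i$ is an independent set with $|D_i|\le t-i+1$; and for all $i\in\{2,\ldots,t\}$, $c_i$ has a neighbor in each of $D_1,\ldots,D_{i-1}$. A pG-$t$-atom is minimal if no proper induced subgraph of it is a pG-$t$-atom. *)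

theory Defs
  imports Main
begin

definition simple_graph :: "'a set \<Rightarrow> ('a \<Rightarrow> 'a \<Rightarrow> bool) \<Rightarrow> bool" where
  "simple_graph V E \<longleftrightarrow> finite V \<and> (\<forall>u v. E u v \<longrightarrow> u \<in> V \<and> v \<in> V)
     \<and> (\<forall>u v. E u v \<longrightarrow> E v u) \<and> (\<forall>v. \<not> E v v)"

definition proper_coloring :: "'a set \<Rightarrow> ('a \<Rightarrow> 'a \<Rightarrow> bool) \<Rightarrow> ('a \<Rightarrow> nat) \<Rightarrow> nat \<Rightarrow> bool" where
  "proper_coloring V E c k \<longleftrightarrow> c ` V = {1..k} \<and> (\<forall>u\<in>V. \<forall>v\<in>V. E u v \<longrightarrow> c u \<noteq> c v)"

definition grundy_vertex :: "'a set \<Rightarrow> ('a \<Rightarrow> 'a \<Rightarrow> bool) \<Rightarrow> ('a \<Rightarrow> nat) \<Rightarrow> 'a \<Rightarrow> bool" where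
  "grundy_vertex V E c v \<longleftrightarrow> (\<forall>j. 1 \<le> j \<and> j < c v \<longrightarrow> (\<exists>u\<in>V. E v u \<and> c u = j))"

definition partial_grundy_coloring :: "'a set \<Rightarrow> ('a \<Rightarrow> 'a \<Rightarrow> bool) \<Rightarrow> ('a \<Rightarrow> nat) \<Rightarrow> nat \<Rightarrow> bool" where
  "partial_grundy_coloring V E c k \<longleftrightarrow> proper_coloring V E c k
     \<and> (\<forall>i\<in>{1..k}. \<exists>v\<in>V. c v = i \<and> grundy_vertex V E c v)"

definition partial_grundy_number :: "'a set \<Rightarrow> ('a \<Rightarrow> 'a \<Rightarrow> bool) \<Rightarrow> nat" where
  "partial_grundy_number V E = Max {k. \<exists>c. partial_grundy_coloring V E c k}"

text \<open>The induced subgraph of (V,E) on S is (S, E restricted to S); every condition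
below only inspects edges between vertices of S.  pG-t-atom on vertex set S:
a partition of S into D_1..D_t with special vertices c_i.\<close>
definition pG_atom :: "'a set \<Rightarrow> ('a \<Rightarrow> 'a \<Rightarrow> bool) \<Rightarrow> nat \<Rightarrow> bool" where
  "pG_atom S E t \<longleftrightarrow> (\<exists>(D :: nat \<Rightarrow> 'a set) (c :: nat \<Rightarrow> 'a).
     (\<Union>i\<in>{1..t}. D i) = S
     \<and> (\<forall>i\<in>{1..t}. \<forall>j\<in>{1..t}. i \<noteq> j \<longrightarrow> D i \<inter> D j = {})
     \<and> (\<forall>i\<in>{1..t}. c i \<in> D i)
     \<and> (\<forall>i\<in>{1..t}. \<forall>x\<in>D i. \<forall>y\<in>D i. \<not> E x y)
     \<and> (\<forall>i\<in>{1..t}. card (D i) \<le> t - i + 1)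
     \<and> (\<forall>i\<in>{2..t}. \<forall>j\<in>{1..<i}. \<exists>x\<in>D j. E (c i) x))"

definition minimal_pG_atom :: "'a set \<Rightarrow> ('a \<Rightarrow> 'a \<Rightarrow> bool) \<Rightarrow> nat \<Rightarrow> bool" where
  "minimal_pG_atom S E t \<longleftrightarrow> pG_atom S E t \<and> (\<forall>S'. S' \<subset> S \<longrightarrow> \<not> pG_atom S' E t)"

end

theory Submission
  imports Defs
begin

lemma ext_step:
  assumes sym: "\<And>u v. E u v \<Longrightarrow> E v u" and irr: "\<And>v. \<not> E v v"
    and pg: "partial_grundy_coloring W E c k" and x: "x \<notin> W"
  shows "\<exists>k'\<ge>k. \<exists>c'. partial_grundy_coloring (insert x W) E c' k'"
proof -
  have img: "c ` W = {1..k}" and pr: "\<forall>u\<in>W. \<forall>v\<in>W. E u v \<longrightarrow> c u \<noteq> c v"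
    and gr: "\<forall>i\<in>{1..k}. \<exists>v\<in>W. c v = i \<and> grundy_vertex W E c v"
    using pg unfolding partial_grundy_coloring_def proper_coloring_def by auto
  define N where "N = c ` {u\<in>W. E x u}"
  have Nsub: "N \<subseteq> {1..k}" using img N_def by auto
  have ex: "\<exists>j. 1 \<le> j \<and> j \<notin> N" using Nsub by (intro exI[of _ "k+1"]) auto
  define j where "j = (LEAST j. 1 \<le> j \<and> j \<notin> N)"
  have j1: "1 \<le> j" and jN: "j \<notin> N" using LeastI_ex[OF ex] j_def by auto
  have jmin: "\<And>i. 1 \<le> i \<Longrightarrow> i < j \<Longrightarrow> i \<in> N" using not_less_Least j_def by blast
  have jle: "j \<le> k + 1"
  proof (rule ccontr)
    assume "\<not> j \<le> k+1" then have "k+1 \<in> N" using jmin by auto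
    then show False using Nsub by auto
  qed
  define c' where "c' = c(x := j)"
  have c'W: "\<And>u. u \<in> W \<Longrightarrow> c' u = c u" using x c'_def by auto
  have prop': "\<forall>u\<in>insert x W. \<forall>v\<in>insert x W. E u v \<longrightarrow> c' u \<noteq> c' v"
  proof (intro ballI impI)
    fix u v assume u: "u \<in> insert x W" and v: "v \<in> insert x W" and e: "E u v"
    show "c' u \<noteq> c' v"
    proof (cases "u = x")
      case True
      then have "v \<noteq> x" using e irr by auto
      then have "v \<in> W" using v by auto
      then have "c v \<in> N" using e True N_def by auto
      then show ?thesis using True jN c'W[OF \<open>v\<in>W\<close>] c'_def by auto
    next
      case False
      then have uW: "u \<in> W" using u by auto
      show ?thesis
      proof (cases "v = x")
        case True
        then have "c u \<in> N" using sym[OF e] uW N_def by auto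
        then show ?thesis using True jN c'W[OF uW] c'_def by auto
      next
        case False
        then show ?thesis using pr uW v e c'W by auto
      qed
    qed
  qed
  have grW: "\<And>v. v \<in> W \<Longrightarrow> grundy_vertex W E c v \<Longrightarrow> grundy_vertex (insert x W) E c' v"
    unfolding grundy_vertex_def using c'W by fastforce
  have gr': "\<forall>i\<in>{1..k}. \<exists>v\<in>insert x W. c' v = i \<and> grundy_vertex (insert x W) E c' v"
    using gr grW c'W by fastforce
  show ?thesis
  proof (cases "j \<le> k")
    case True
    have "c' ` W = c ` W" using c'W by (auto intro: image_cong)
    then have "c' ` insert x W = insert j (c ` W)" using c'_def by auto
    then have "c' ` insert x W = {1..k}" using img True j1 by auto
    then have "partial_grundy_coloring (insert x W) E c' k"
      using prop' gr' unfolding partial_grundy_coloring_def proper_coloring_def by auto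
    then show ?thesis by auto
  next
    case False
    then have jk: "j = k + 1" using jle by auto
    have im: "c' ` insert x W = {1..k+1}"
    proof
      have "c' ` W = c ` W" using c'W by (auto intro: image_cong)
      then have "c' ` insert x W = insert j (c ` W)" using c'_def by auto
      then show "c' ` insert x W \<subseteq> {1..k+1}" using img jk by auto
      show "{1..k+1} \<subseteq> c' ` insert x W"
      proof
        fix i assume "i \<in> {1..k+1}"
        then show "i \<in> c' ` insert x W"
        proof (cases "i = k+1")
          case True then show ?thesis using jk c'_def by auto
        next
          case False
          then have "i \<in> c ` W" using img \<open>i \<in> {1..k+1}\<close> by auto
          then show ?thesis using c'W by force
        qed
      qed
    qed
    have gx: "grundy_vertex (insert x W) E c' x"
      unfolding grundy_vertex_def
    proof (intro allI impI)
      fix i assume "1 \<le> i \<and> i < c' x"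
      then have "i \<in> N" using jmin c'_def by auto
      then obtain u where "u \<in> W" "E x u" "c u = i" using N_def by auto
      then show "\<exists>u\<in>insert x W. E x u \<and> c' u = i" using c'W by auto
    qed
    have "\<forall>i\<in>{1..k+1}. \<exists>v\<in>insert x W. c' v = i \<and> grundy_vertex (insert x W) E c' v"
    proof
      fix i assume i: "i \<in> {1..k+1}"
      show "\<exists>v\<in>insert x W. c' v = i \<and> grundy_vertex (insert x W) E c' v"
      proof (cases "i = k+1")
        case True then show ?thesis using gx jk c'_def by auto
      next
        case False then show ?thesis using gr' i by auto
      qed
    qed
    then have "partial_grundy_coloring (insert x W) E c' (k+1)"
      using prop' im unfolding partial_grundy_coloring_def proper_coloring_def by auto
    then show ?thesis by (intro exI[of _ "k+1"]) auto
  qed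
qed

lemma ext_all:
  assumes sym: "\<And>u v. E u v \<Longrightarrow> E v u" and irr: "\<And>v. \<not> E v v"
    and fin: "finite A"
  shows "partial_grundy_coloring S E c k \<Longrightarrow> \<exists>k'\<ge>k. \<exists>c'. partial_grundy_coloring (S \<union> A) E c' k'"
  using fin
proof (induction A rule: finite_induct)
  case empty then show ?case by auto
next
  case (insert x A)
  then obtain k1 c1 where k1: "k1 \<ge> k" "partial_grundy_coloring (S \<union> A) E c1 k1" by auto
  show ?case
  proof (cases "x \<in> S \<union> A")
    case True
    then have "S \<union> insert x A = S \<union> A" by auto
    then show ?thesis using k1 by auto
  next
    case False
    from ext_step[OF sym irr k1(2) False] obtain k2 c2 where
      "k2 \<ge> k1" "partial_grundy_coloring (insert x (S \<union> A)) E c2 k2" by auto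
    then show ?thesis using k1 by (intro exI[of _ k2]) auto
  qed
qed

lemma atom_coloring:
  assumes "pG_atom S E t"
  shows "\<exists>c. partial_grundy_coloring S E c t"
proof -
  obtain D cc where un: "(\<Union>i\<in>{1..t}. D i) = S"
    and dis: "\<forall>i\<in>{1..t}. \<forall>j\<in>{1..t}. i \<noteq> j \<longrightarrow> D i \<inter> D j = {}"
    and cin: "\<forall>i\<in>{1..t}. cc i \<in> D i"
    and ind: "\<forall>i\<in>{1..t}. \<forall>x\<in>D i. \<forall>y\<in>D i. \<not> E x y"
    and adj: "\<forall>i\<in>{2..t}. \<forall>j\<in>{1..<i}. \<exists>x\<in>D j. E (cc i) x"
    using assms unfolding pG_atom_def by blast
  define col where "col x = (SOME i. i \<in> {1..t} \<and> x \<in> D i)" for x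
  have colD: "\<And>i x. i \<in> {1..t} \<Longrightarrow> x \<in> D i \<Longrightarrow> col x = i"
  proof -
    fix i x assume i: "i \<in> {1..t}" and x: "x \<in> D i"
    have "col x \<in> {1..t} \<and> x \<in> D (col x)" unfolding col_def
      by (rule someI[of _ i]) (use i x in auto)
    then show "col x = i" using dis i x by blast
  qed
  have colS: "\<And>x. x \<in> S \<Longrightarrow> col x \<in> {1..t} \<and> x \<in> D (col x)"
  proof -
    fix x assume "x \<in> S"
    then obtain i where "i \<in> {1..t}" "x \<in> D i" using un by auto
    then show "col x \<in> {1..t} \<and> x \<in> D (col x)" using colD by auto
  qed
  have img: "col ` S = {1..t}"
  proof
    show "col ` S \<subseteq> {1..t}" using colS by auto
    show "{1..t} \<subseteq> col ` S"
    proof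
      fix i assume i: "i \<in> {1..t}"
      then have "cc i \<in> S" "col (cc i) = i" using cin un colD by auto
      then show "i \<in> col ` S" by force
    qed
  qed
  have pr: "\<forall>u\<in>S. \<forall>v\<in>S. E u v \<longrightarrow> col u \<noteq> col v"
  proof (intro ballI impI)
    fix u v assume u: "u \<in> S" and v: "v \<in> S" and e: "E u v"
    show "col u \<noteq> col v"
    proof
      assume eq: "col u = col v"
      have "col u \<in> {1..t}" "u \<in> D (col u)" "v \<in> D (col u)" using colS[OF u] colS[OF v] eq by auto
      then show False using ind e by blast
    qed
  qed
  have gr: "\<forall>i\<in>{1..t}. \<exists>v\<in>S. col v = i \<and> grundy_vertex S E col v"
  proof
    fix i assume i: "i \<in> {1..t}"
    have cs: "cc i \<in> S" and cc: "col (cc i) = i" using cin un colD i by auto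
    have "grundy_vertex S E col (cc i)" unfolding grundy_vertex_def
    proof (intro allI impI)
      fix j assume j: "1 \<le> j \<and> j < col (cc i)"
      then have "i \<in> {2..t}" "j \<in> {1..<i}" using i cc by auto
      then obtain y where "y \<in> D j" "E (cc i) y" using adj by blast
      moreover have "j \<in> {1..t}" using j i cc by auto
      ultimately show "\<exists>u\<in>S. E (cc i) u \<and> col u = j" using colD un by blast
    qed
    then show "\<exists>v\<in>S. col v = i \<and> grundy_vertex S E col v" using cs cc by blast
  qed
  show ?thesis using img pr gr unfolding partial_grundy_coloring_def proper_coloring_def by blast
qed

lemma coloring_atom:
  assumes pg: "partial_grundy_coloring V E c k" and tk: "t \<le> k"
  shows "\<exists>S\<subseteq>V. pG_atom S E t"
proof -
  have img: "c ` V = {1..k}" and pr: "\<forall>u\<in>V. \<forall>v\<in>V. E u v \<longrightarrow> c u \<noteq> c v"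
    and gr: "\<forall>i\<in>{1..k}. \<exists>v\<in>V. c v = i \<and> grundy_vertex V E c v"
    using pg unfolding partial_grundy_coloring_def proper_coloring_def by auto
  define g where "g i = (SOME v. v \<in> V \<and> c v = i \<and> grundy_vertex V E c v)" for i
  have g: "\<And>i. i \<in> {1..t} \<Longrightarrow> g i \<in> V \<and> c (g i) = i \<and> grundy_vertex V E c (g i)"
  proof -
    fix i assume "i \<in> {1..t}"
    then have "\<exists>v. v \<in> V \<and> c v = i \<and> grundy_vertex V E c v" using gr tk by auto
    then show "g i \<in> V \<and> c (g i) = i \<and> grundy_vertex V E c (g i)"
      unfolding g_def by (rule someI_ex)
  qed
  define n where "n j i = (SOME u. u \<in> V \<and> E (g j) u \<and> c u = i)" for j i
  have n: "\<And>i j. j \<in> {1..t} \<Longrightarrow> 1 \<le> i \<Longrightarrow> i < j \<Longrightarrow> n j i \<in> V \<and> E (g j) (n j i) \<and> c (n j i) = i"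
  proof -
    fix i j assume j: "j \<in> {1..t}" and i: "1 \<le> i" "i < j"
    have "\<exists>u\<in>V. E (g j) u \<and> c u = i" using g[OF j] i unfolding grundy_vertex_def by auto
    then have "\<exists>u. u \<in> V \<and> E (g j) u \<and> c u = i" by blast
    then show "n j i \<in> V \<and> E (g j) (n j i) \<and> c (n j i) = i" unfolding n_def by (rule someI_ex)
  qed
  define D where "D i = insert (g i) ((\<lambda>j. n j i) ` {i<..t})" for i
  define S where "S = (\<Union>i\<in>{1..t}. D i)"
  have Dprop: "\<And>i x. i \<in> {1..t} \<Longrightarrow> x \<in> D i \<Longrightarrow> x \<in> V \<and> c x = i"
    using g n unfolding D_def by fastforce
  have "pG_atom S E t"
    unfolding pG_atom_def
  proof (intro exI[of _ D] exI[of _ g] conjI)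
    show "(\<Union>i\<in>{1..t}. D i) = S" by (simp add: S_def)
    show "\<forall>i\<in>{1..t}. \<forall>j\<in>{1..t}. i \<noteq> j \<longrightarrow> D i \<inter> D j = {}"
      using Dprop by blast
    show "\<forall>i\<in>{1..t}. g i \<in> D i" by (simp add: D_def)
    show "\<forall>i\<in>{1..t}. \<forall>x\<in>D i. \<forall>y\<in>D i. \<not> E x y"
    proof (intro ballI notI)
      fix i x y assume "i \<in> {1..t}" "x \<in> D i" "y \<in> D i" "E x y"
      then have "x \<in> V" "y \<in> V" "c x = c y" using Dprop[of i x] Dprop[of i y] by auto
      then show False using pr \<open>E x y\<close> by blast
    qed
    show "\<forall>i\<in>{1..t}. card (D i) \<le> t - i + 1"
    proof
      fix i assume i: "i \<in> {1..t}"
      have "card (D i) \<le> Suc (card ((\<lambda>j. n j i) ` {i<..t}))"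
        unfolding D_def by (rule card_insert_le_m1) auto
      also have "card ((\<lambda>j. n j i) ` {i<..t}) \<le> card {i<..t}" by (rule card_image_le) auto
      finally show "card (D i) \<le> t - i + 1" by simp
    qed
    show "\<forall>i\<in>{2..t}. \<forall>j\<in>{1..<i}. \<exists>x\<in>D j. E (g i) x"
    proof (intro ballI)
      fix i j assume i: "i \<in> {2..t}" and j: "j \<in> {1..<i}"
      have "n i j \<in> D j" using i j unfolding D_def by auto
      moreover have "E (g i) (n i j)" using n[of i j] i j by auto
      ultimately show "\<exists>x\<in>D j. E (g i) x" by blast
    qed
  qed
  moreover have "S \<subseteq> V" using Dprop S_def by auto
  ultimately show ?thesis by blast
qed

lemma minimal_exists:
  assumes "finite S" "pG_atom S E t"
  shows "\<exists>S'\<subseteq>S. minimal_pG_atom S' E t"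
  using assms
proof (induction S rule: finite_psubset_induct)
  case (psubset A)
  show ?case
  proof (cases "minimal_pG_atom A E t")
    case True then show ?thesis by blast
  next
    case False
    then obtain B where "B \<subset> A" "pG_atom B E t" using psubset.prems unfolding minimal_pG_atom_def by blast
    then obtain S' where "S' \<subseteq> B" "minimal_pG_atom S' E t" using psubset.IH by blast
    then show ?thesis using \<open>B \<subset> A\<close> by (intro exI[of _ S']) auto
  qed
qed

theorem mainTheorem2:
  fixes V :: "'a set" and E :: "'a \<Rightarrow> 'a \<Rightarrow> bool" and t :: nat
  assumes "simple_graph V E" and "t \<ge> 1"
  shows "t \<le> partial_grundy_number V E \<longleftrightarrow> (\<exists>S\<subseteq>V. minimal_pG_atom S E t)"
proof -
  have fin: "finite V" and sym: "\<And>u v. E u v \<Longrightarrow> E v u" and irr: "\<And>v. \<not> E v v"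
    using assms(1) unfolding simple_graph_def by auto
  define K where "K = {k. \<exists>c. partial_grundy_coloring V E c k}"
  have Kb: "K \<subseteq> {..card V}"
  proof
    fix k assume "k \<in> K"
    then obtain c where "c ` V = {1..k}" unfolding K_def partial_grundy_coloring_def proper_coloring_def by auto
    then have "card {1..k} \<le> card V" using card_image_le fin by metis
    then show "k \<in> {..card V}" by simp
  qed
  then have Kf: "finite K" using finite_subset by blast
  have Kne: "K \<noteq> {}"
  proof -
    have "partial_grundy_coloring {} E (\<lambda>_. 0) 0"
      unfolding partial_grundy_coloring_def proper_coloring_def by auto
    from ext_all[OF sym irr fin this] obtain k c where "partial_grundy_coloring V E c k" by auto
    then show ?thesis unfolding K_def by auto
  qed
  have pgn: "partial_grundy_number V E = Max K" unfolding partial_grundy_number_def K_def ..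
  show ?thesis
  proof
    assume "t \<le> partial_grundy_number V E"
    moreover have "Max K \<in> K" using Kf Kne by simp
    ultimately obtain c k where "partial_grundy_coloring V E c k" "t \<le> k"
      using pgn K_def by auto
    from coloring_atom[OF this] obtain S where SV: "S \<subseteq> V" and Sa: "pG_atom S E t" by blast
    have fS: "finite S" using SV fin by (rule finite_subset)
    obtain S' where "S' \<subseteq> S" "minimal_pG_atom S' E t" using minimal_exists[OF fS Sa] by blast
    then show "\<exists>S\<subseteq>V. minimal_pG_atom S E t" using SV by (intro exI[of _ S']) auto
  next
    assume "\<exists>S\<subseteq>V. minimal_pG_atom S E t"
    then obtain S where S: "S \<subseteq> V" "pG_atom S E t" unfolding minimal_pG_atom_def by blast
    obtain c where "partial_grundy_coloring S E c t" using atom_coloring[OF S(2)] by blast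
    have fd: "finite (V - S)" using fin by simp
    have un: "S \<union> (V - S) = V" using S(1) by blast
    from ext_all[OF sym irr fd \<open>partial_grundy_coloring S E c t\<close>] obtain k c' where
      "k \<ge> t" "partial_grundy_coloring V E c' k" unfolding un by blast
    then have "k \<in> K" unfolding K_def by auto
    then have "k \<le> Max K" using Kf by simp
    then show "t \<le> partial_grundy_number V E" using pgn \<open>k \<ge> t\<close> by simp
  qed
qed

end
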